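(* Assume $abcd\neq0$ and fix $\omega\in B_{out}$. Let $\theta>0$ be defined by $\cosh\theta=|x(\omega)|$. Then \[\lim_{M\to\infty}\mathcal{E}_M(\omega)=\frac{\cosh\theta}{\sinh\theta}=\frac{|x(\omega)|}{\sqrt{x(\omega)^2-1}}.\]
   Context: Setting: $C=\begin{bmatrix} a&b\\ c&d\end{bmatrix}$ a fixed $2\times2$ unitary matrix, $\Delta=\det C$, a fixed square root $\Delta^{1/2}$; for each $M\ge1$, $\Gamma_M=\{0,\dots,M-1\}$ and $E_M$ is the linear map on $\ell^2(\Gamma_M;\mathbb{C}^2)$ with $(E_M\varphi)(x)=P\varphi(x+1)+Q\varphi(x-1)$, $\varphi(-1)=\varphi(M)=0$, $P=\begin{bmatrix} a&b\\0&0\end{bmatrix}$, $Q=\begin{bmatrix}0&0\\c&d\end{bmatrix}$. For $\omega$ on the unit circle let $z=\Delta^{1/2}\omega$ and let $\varphi$ be the unique solution of $(z-E_M)\varphi=\delta_0|R\rangle$, $|R\rangle=(0,1)^\top$; the energy is $\mathcal{E}_M(\omega)=\sum_{n=0}^{M-1}\|\varphi(n)\|^2_{\mathbb{C}^2}$. Let $x(\omega)=\frac{\omega+\omega^{-1}}{2|a|}$ and $B_{out}=\{\omega:|\omega|=1,\ |x(\omega)|>1\}$. *)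

theory Defs
  imports "HOL-Analysis.Analysis"
begin

text \<open>The 2x2 matrix C = [[a,b],[c,d]] is unitary: C* C = I (equivalently C C* = I).\<close>
definition unitary2 :: "complex \<Rightarrow> complex \<Rightarrow> complex \<Rightarrow> complex \<Rightarrow> bool" where
  "unitary2 a b c d \<longleftrightarrow>
     cnj a * a + cnj c * c = 1 \<and> cnj b * b + cnj d * d = 1 \<and> cnj a * b + cnj c * d = 0"

text \<open>A vector phi in l2(Gamma_M; C^2), written as a function on the integers
  (pairs = the two components in C^2), extended by zero outside Gamma_M = {0..M-1};
  this encodes the boundary conditions phi(-1) = phi(M) = 0.
  (E_M phi)(x) = P phi(x+1) + Q phi(x-1), with P phi = (a phi_1 + b phi_2, 0)
  and Q phi = (0, c phi_1 + d phi_2).\<close>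
definition E_op :: "complex \<Rightarrow> complex \<Rightarrow> complex \<Rightarrow> complex \<Rightarrow> nat
                    \<Rightarrow> (int \<Rightarrow> complex \<times> complex) \<Rightarrow> int \<Rightarrow> complex \<times> complex" where
  "E_op a b c d M \<phi> x =
     (if 0 \<le> x \<and> x < int M then
        (a * fst (\<phi> (x+1)) + b * snd (\<phi> (x+1)), c * fst (\<phi> (x-1)) + d * snd (\<phi> (x-1)))
      else (0, 0))"

definition in_l2_Gamma :: "nat \<Rightarrow> (int \<Rightarrow> complex \<times> complex) \<Rightarrow> bool" where
  "in_l2_Gamma M \<phi> \<longleftrightarrow> (\<forall>x. \<not> (0 \<le> x \<and> x < int M) \<longrightarrow> \<phi> x = (0, 0))"

text \<open>phi solves (z - E_M) phi = delta_0 |R>, |R> = (0,1).\<close>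
definition is_resolvent_sol :: "complex \<Rightarrow> complex \<Rightarrow> complex \<Rightarrow> complex \<Rightarrow> nat \<Rightarrow> complex
                               \<Rightarrow> (int \<Rightarrow> complex \<times> complex) \<Rightarrow> bool" where
  "is_resolvent_sol a b c d M z \<phi> \<longleftrightarrow>
     in_l2_Gamma M \<phi> \<and>
     (\<forall>x. 0 \<le> x \<and> x < int M \<longrightarrow>
        z * fst (\<phi> x) - fst (E_op a b c d M \<phi> x) = 0 \<and>
        z * snd (\<phi> x) - snd (E_op a b c d M \<phi> x) = (if x = 0 then 1 else 0))"

text \<open>Energy E_M(omega) with z = Delta^(1/2) * omega, sqD a fixed square root of Delta.\<close>
definition energy :: "complex \<Rightarrow> complex \<Rightarrow> complex \<Rightarrow> complex \<Rightarrow> complex \<Rightarrow> complex \<Rightarrow> nat \<Rightarrow> real" where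
  "energy a b c d sqD \<omega> M =
     (let \<phi> = (THE \<phi>. is_resolvent_sol a b c d M (sqD * \<omega>) \<phi>)
      in \<Sum>n<M. (cmod (fst (\<phi> (int n))))\<^sup>2 + (cmod (snd (\<phi> (int n))))\<^sup>2)"

definition xfun :: "complex \<Rightarrow> complex \<Rightarrow> complex" where
  "xfun a \<omega> = (\<omega> + inverse \<omega>) / (2 * of_real (cmod a))"

definition B_out :: "complex \<Rightarrow> complex set" where
  "B_out a = {\<omega>. cmod \<omega> = 1 \<and> cmod (xfun a \<omega>) > 1}"

end

theory Submission
  imports Defs
begin


locale W =
  fixes a b c d sqD \<omega> :: complex and \<theta> :: real
  assumes unit: "unitary2 a b c d"
    and nz: "a * b * c * d \<noteq> 0"
    and sq: "sqD ^ 2 = a * d - b * c"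
    and om: "\<omega> \<in> B_out a"
    and th: "\<theta> > 0" and ch: "cosh \<theta> = cmod (xfun a \<omega>)"
begin

definition "Dl = a * d - b * c"
definition "z = sqD * \<omega>"
definition "mu = (if Re \<omega> \<ge> 0 then exp \<theta> else - exp \<theta>)"
definition "lam = sqD * cnj a / of_real (cmod a)"
definition "r1 = lam * of_real mu"
definition "r2 = lam / of_real mu"
definition "p1 = r1 * z - d"
definition "p2 = r2 * z - d"

lemma a0: "a \<noteq> 0" and b0: "b \<noteq> 0" and c0: "c \<noteq> 0" and d0: "d \<noteq> 0"
  using nz by auto

lemma u1: "cnj a * a + cnj c * c = 1" and u2: "cnj b * b + cnj d * d = 1"
  and u3: "cnj a * b + cnj c * d = 0"
  using unit unfolding unitary2_def by auto

lemma d_eq: "d = Dl * cnj a"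
proof -
  have e: "cnj a * b = - (cnj c * d)" using u3 by (simp add: eq_neg_iff_add_eq_0)
  have "Dl * cnj a = a * cnj a * d - (cnj a * b) * c" by (simp add: Dl_def algebra_simps)
  also have "\<dots> = a * cnj a * d + cnj c * d * c" by (simp add: e)
  also have "\<dots> = d * (cnj a * a + cnj c * c)" by (simp add: algebra_simps)
  finally show ?thesis using u1 by simp
qed

lemma b_eq: "b = - Dl * cnj c"
proof -
  have e: "cnj c * d = - (cnj a * b)" using u3 by (simp add: eq_neg_iff_add_eq_0 add.commute)
  have "Dl * cnj c = a * (cnj c * d) - b * c * cnj c" by (simp add: Dl_def algebra_simps)
  also have "\<dots> = - a * cnj a * b - b * c * cnj c" by (simp add: e)
  also have "\<dots> = - b * (cnj a * a + cnj c * c)" by (simp add: algebra_simps)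
  finally show ?thesis using u1 by simp
qed

lemma Dl_unit: "Dl * cnj Dl = 1"
proof -
  have "1 = cnj b * b + cnj d * d" using u2 by simp
  also have "\<dots> = Dl * cnj Dl * (cnj a * a + cnj c * c)"
  proof -
    have "\<And>D. b = -D*cnj c \<Longrightarrow> d = D*cnj a \<Longrightarrow> cnj b*b + cnj d*d = D*cnj D*(cnj a*a+cnj c*c)"
      by (simp add: algebra_simps)
    thus ?thesis using b_eq d_eq by blast
  qed
  finally show ?thesis using u1 by simp
qed

lemma norm_Dl: "cmod Dl = 1"
proof -
  have "of_real ((cmod Dl)^2) = (1::complex)" using Dl_unit complex_norm_square by metis
  hence "(cmod Dl)^2 = 1" by (metis of_real_eq_1_iff)
  thus ?thesis by (metis norm_ge_zero power2_eq_1_iff neg_0_le_iff_le not_one_le_zero)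
qed

lemma norm_sqD: "cmod sqD = 1"
proof -
  have "cmod sqD ^ 2 = 1" using norm_Dl sq by (simp add: Dl_def norm_power[symmetric])
  thus ?thesis by (metis norm_ge_zero power2_eq_1_iff neg_0_le_iff_le not_one_le_zero)
qed

lemma norm_om: "cmod \<omega> = 1" using om by (simp add: B_out_def)

lemma om_cnj: "\<omega> * cnj \<omega> = 1"
  by (metis complex_norm_square norm_om of_real_1 power_one)

lemma sqD_cnj: "sqD * cnj sqD = 1"
  by (metis complex_norm_square norm_sqD of_real_1 power_one)

lemma norm_z: "cmod z = 1" by (simp add: z_def norm_mult norm_sqD norm_om)
lemma z0: "z \<noteq> 0" using norm_z by auto

lemma na_pos: "cmod a > 0" using a0 by simp

lemma xfun_eq: "xfun a \<omega> = of_real (Re \<omega> / cmod a)"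
proof -
  have "inverse \<omega> = cnj \<omega>" using om_cnj by (metis inverse_unique)
  hence "\<omega> + inverse \<omega> = of_real (2 * Re \<omega>)" by (simp add: complex_add_cnj)
  thus ?thesis by (simp add: xfun_def)
qed

lemma cosh_eq: "cosh \<theta> = \<bar>Re \<omega>\<bar> / cmod a"
  using ch xfun_eq na_pos by (simp add: norm_divide)

lemma mu_sum: "mu + 1 / mu = 2 * Re \<omega> / cmod a"
proof -
  have "exp \<theta> + 1 / exp \<theta> = 2 * cosh \<theta>" by (simp add: cosh_def exp_minus field_simps)
  thus ?thesis using cosh_eq by (auto simp: mu_def abs_if field_simps)
qed

lemma abs_mu: "\<bar>mu\<bar> = exp \<theta>" by (simp add: mu_def)
lemma mu0: "mu \<noteq> 0" using abs_mu by auto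
lemma mu_sq: "mu^2 = exp (2*\<theta>)" 
  by (metis abs_mu power2_abs exp_double power2_eq_square)


lemma acnj: "a * cnj a = (of_real (cmod a))^2" by (simp add: complex_norm_square[symmetric])
lemma ccnj: "c * cnj c = of_real (1 - (cmod a)^2)"
  using u1 acnj complex_norm_square[of c] by (simp add: algebra_simps)

lemma lam_sq: "a * lam^2 = d"
proof -
  have "a * lam^2 = sqD^2 * cnj a * (a * cnj a) / of_real ((cmod a)^2)"
    by (simp add: lam_def power2_eq_square field_simps)
  also have "\<dots> = Dl * cnj a" using acnj na_pos sq by (simp add: Dl_def)
  finally show ?thesis using d_eq by simp
qed

lemma lam_cnj: "lam * cnj lam = 1"
proof -
  have "lam * cnj lam = (sqD * cnj sqD) * (a * cnj a) / of_real ((cmod a)^2)"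
    by (simp add: lam_def power2_eq_square field_simps)
  thus ?thesis using sqD_cnj acnj na_pos by simp
qed

lemma lamz: "lam * z = Dl * cnj a * \<omega> / of_real (cmod a)"
proof -
  have "lam * z = sqD^2 * cnj a * \<omega> / of_real (cmod a)"
    by (simp add: lam_def z_def power2_eq_square)
  thus ?thesis using sq by (simp add: Dl_def)
qed

lemma om_plus: "\<omega> + cnj \<omega> = of_real (2 * Re \<omega>)" by (simp add: complex_add_cnj)

lemma char_eq:
  fixes t :: real
  assumes t0: "t \<noteq> 0" and tt: "t + 1/t = 2 * Re \<omega> / cmod a"
  shows "a * z * (lam * of_real t)^2 - (z^2 + Dl) * (lam * of_real t) + d * z = 0"
proof -
  have e1: "a * z * (lam * of_real t)^2 + d * z = d * z * of_real (t^2 + 1)"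
    using lam_sq by (simp add: power_mult_distrib algebra_simps)
  have z2: "z^2 = Dl * \<omega>^2" using sq by (simp add: z_def Dl_def power_mult_distrib)
  have "\<omega>^2 + 1 = \<omega> * (\<omega> + cnj \<omega>)" using om_cnj by (simp add: power2_eq_square algebra_simps)
  also have "\<dots> = \<omega> * of_real (cmod a * (t + 1/t))" using tt na_pos by (simp add: om_plus)
  finally have e2: "\<omega>^2 + 1 = \<omega> * of_real (cmod a) * of_real ((t^2+1)/t)"
    using t0 by (simp add: field_simps power2_eq_square)
  have "(z^2 + Dl) * (lam * of_real t) = Dl * (\<omega>^2 + 1) * lam * of_real t"
    using z2 by (simp add: algebra_simps)
  also have "\<dots> = Dl * (\<omega> * of_real (cmod a) * of_real ((t^2+1)/t)) * lam * of_real t"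
    unfolding e2 ..
  also have "\<dots> = Dl * \<omega> * of_real (cmod a) * lam * of_real (t^2+1)"
    using t0 by (simp add: field_simps)
  also have "\<dots> = d * z * of_real (t^2 + 1)"
    using na_pos d_eq by (simp add: lam_def z_def field_simps)
  finally have "a * z * (lam * of_real t)^2 + d * z = (z^2 + Dl) * (lam * of_real t)" using e1 by simp
  thus ?thesis by (metis diff_add_eq diff_self)
qed

lemma p_norm:
  fixes t :: real
  assumes t0: "t \<noteq> 0" and tt: "t + 1/t = 2 * Re \<omega> / cmod a"
  shows "(lam * of_real t * z - d) * cnj (lam * of_real t * z - d) = c * cnj c * of_real (t^2)"
proof -
  define A where "A = cmod a"
  have A0: "A > 0" using na_pos A_def by simp
  have pe: "lam * of_real t * z - d = Dl * cnj a * (\<omega> * of_real (t / A) - 1)"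
    using lamz d_eq A0 by (simp add: A_def field_simps)
  have "(lam * of_real t * z - d) * cnj (lam * of_real t * z - d)
      = (Dl * cnj Dl) * (a * cnj a) * (\<omega> * cnj \<omega> * of_real (t/A)^2 - (\<omega> + cnj \<omega>) * of_real (t/A) + 1)"
    unfolding pe by (simp add: algebra_simps power2_eq_square add_divide_distrib diff_divide_distrib)
  also have "\<dots> = of_real (A^2) * (of_real (t/A)^2 - of_real (2 * Re \<omega>) * of_real (t/A) + 1)"
    using Dl_unit acnj om_cnj om_plus by (simp add: A_def)
  also have "\<dots> = of_real (A^2 * ((t/A)^2 - (2 * Re \<omega>) * (t/A) + 1))"
    by simp
  also have "A^2 * ((t/A)^2 - (2 * Re \<omega>) * (t/A) + 1) = (1 - A^2) * t^2"
  proof -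
    have r: "2 * Re \<omega> = A * (t + 1/t)" using tt A0 by (simp add: A_def field_simps)
    show ?thesis unfolding r using A0 t0 by (simp add: field_simps power2_eq_square)
  qed
  finally show ?thesis using ccnj by (simp add: A_def)
qed


lemma mu_gt: "mu^2 > 1" using mu_sq th by simp
lemma abs_mu_gt: "\<bar>mu\<bar> > 1" using abs_mu th by simp

lemma mu_inv_sum: "1/mu + 1/(1/mu) = 2 * Re \<omega> / cmod a" using mu_sum by simp

lemma char1: "a * z * r1^2 - (z^2 + Dl) * r1 + d * z = 0"
  using char_eq[OF mu0 mu_sum] by (simp add: r1_def)
lemma char2: "a * z * r2^2 - (z^2 + Dl) * r2 + d * z = 0"
  using char_eq[of "1/mu"] mu0 mu_inv_sum by (simp add: r2_def divide_inverse)

lemma eig: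
  assumes "a * z * r^2 - (z^2 + Dl) * r + d * z = 0"
  shows "z * (r * z - d) = a * r * (r * z - d) + b * c * r"
proof -
  have "z * (r * z - d) - (a * r * (r * z - d) + b * c * r) = - (a * z * r^2 - (z^2 + Dl) * r + d * z)"
    by (simp add: Dl_def algebra_simps power2_eq_square)
  thus ?thesis using assms by simp
qed

lemma eig1: "z * p1 = a * r1 * p1 + b * c * r1" using eig[OF char1] by (simp add: p1_def)
lemma eig2: "z * p2 = a * r2 * p2 + b * c * r2" using eig[OF char2] by (simp add: p2_def)

lemma norm_lam: "cmod lam = 1" using na_pos by (simp add: lam_def norm_mult norm_divide norm_sqD)
lemma norm_r1: "cmod r1 = \<bar>mu\<bar>" by (simp add: r1_def norm_mult norm_lam)
lemma norm_r2: "cmod r2 = 1 / \<bar>mu\<bar>" by (simp add: r2_def norm_divide norm_lam)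

lemma cc2: "c * cnj c = (of_real (cmod c))^2" by (simp add: complex_norm_square[symmetric])

lemma pnorm_gen:
  fixes t :: real
  assumes t0: "t \<noteq> 0" and tt: "t + 1/t = 2 * Re \<omega> / cmod a"
  shows "cmod (lam * of_real t * z - d) = cmod c * \<bar>t\<bar>"
proof -
  have "of_real ((cmod (lam * of_real t * z - d))^2) = (of_real ((cmod c * \<bar>t\<bar>)^2) :: complex)"
    unfolding complex_norm_square p_norm[OF assms] using cc2 by (simp add: power_mult_distrib)
  hence "(cmod (lam * of_real t * z - d))^2 = (cmod c * \<bar>t\<bar>)^2" using of_real_eq_iff by blast
  thus ?thesis by (simp add: power2_eq_iff_nonneg)
qed

lemma norm_p1: "cmod p1 = cmod c * \<bar>mu\<bar>"
  using pnorm_gen[OF mu0 mu_sum] by (simp add: p1_def r1_def)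
lemma norm_p2: "cmod p2 = cmod c / \<bar>mu\<bar>"
  using pnorm_gen[of "1/mu"] mu0 mu_inv_sum by (simp add: p2_def r2_def divide_inverse)

lemma p1p2: "p1 \<noteq> p2"
proof
  assume "p1 = p2"
  hence "r1 * z = r2 * z" by (simp add: p1_def p2_def)
  hence "r1 = r2" using z0 by simp
  hence "cmod r1 = cmod r2" by simp
  thus False using abs_mu_gt mu_gt by (simp add: norm_r1 norm_r2 field_simps power2_eq_square)
qed

lemma pow_ne: "r1^k * p1 \<noteq> r2^k * p2"
proof
  assume "r1^k * p1 = r2^k * p2"
  hence "cmod (r1^k * p1) = cmod (r2^k * p2)" by simp
  hence e: "\<bar>mu\<bar>^k * (cmod c * \<bar>mu\<bar>) = (1/\<bar>mu\<bar>)^k * (cmod c / \<bar>mu\<bar>)"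
    by (simp add: norm_mult norm_power norm_r1 norm_r2 norm_p1 norm_p2)
  have "(1/\<bar>mu\<bar>)^k * (cmod c / \<bar>mu\<bar>) < 1 * cmod c"
  proof -
    have "(1/\<bar>mu\<bar>)^k \<le> 1" using abs_mu_gt by (simp add: power_le_one)
    moreover have "cmod c / \<bar>mu\<bar> < cmod c" using abs_mu_gt c0 by (simp add: divide_less_eq)
    ultimately show ?thesis using c0 abs_mu_gt by (intro mult_le_less_imp_less) auto
  qed
  moreover have "1 * cmod c \<le> \<bar>mu\<bar>^k * (cmod c * \<bar>mu\<bar>)"
  proof -
    have "1 \<le> \<bar>mu\<bar>^k" using abs_mu_gt by (simp add: one_le_power)
    moreover have "cmod c * 1 \<le> cmod c * \<bar>mu\<bar>" using abs_mu_gt by (intro mult_left_mono) auto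
    ultimately show ?thesis using abs_mu_gt by (intro mult_mono) auto
  qed
  ultimately show False using e by simp
qed

definition "Phi A B n = (A * r1^n * p1 + B * r2^n * p2, c * (A * r1^n + B * r2^n))"

lemma Phi_step1: "z * fst (Phi A B n) = a * fst (Phi A B (Suc n)) + b * snd (Phi A B (Suc n))"
proof -
  have "z * fst (Phi A B n) = A * r1^n * (z * p1) + B * r2^n * (z * p2)"
    by (simp add: Phi_def algebra_simps)
  also have "\<dots> = A * r1^n * (a * r1 * p1 + b * c * r1) + B * r2^n * (a * r2 * p2 + b * c * r2)"
    by (simp add: eig1 eig2)
  finally show ?thesis by (simp add: Phi_def algebra_simps)
qed

lemma Phi_step2: "z * snd (Phi A B (Suc n)) = c * fst (Phi A B n) + d * snd (Phi A B n)"
  by (simp add: Phi_def p1_def p2_def algebra_simps)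

end


context W begin

definition "g = 1 / (c * z)"
definition "Dm k = r2^k * p2 - r1^k * p1"
definition "alpha M = g * r2^(M-1) * p2 / Dm (M-1)"
definition "beta M = - g * r1^(M-1) * p1 / Dm (M-1)"
definition "phiM M x = (if 0 \<le> x \<and> x < int M then Phi (alpha M) (beta M) (nat x) else (0,0))"

lemma Dm0: "Dm k \<noteq> 0" using pow_ne[of k] by (simp add: Dm_def)

lemma ab_sum: "alpha M + beta M = g"
proof -
  have "alpha M + beta M = (g * (r2^(M-1)*p2) - g * (r1^(M-1)*p1)) / Dm (M-1)"
    by (simp add: alpha_def beta_def add_divide_distrib[symmetric] diff_divide_distrib mult.assoc)
  also have "\<dots> = g * Dm (M-1) / Dm (M-1)" by (simp add: Dm_def right_diff_distrib)
  finally show ?thesis using Dm0[of "M-1"] by simp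
qed

lemma ab_end: "fst (Phi (alpha M) (beta M) (M-1)) = 0"
  using Dm0[of "M-1"] by (simp add: Phi_def alpha_def beta_def field_simps)

lemma exist: assumes "M \<ge> 1" shows "is_resolvent_sol a b c d M z (phiM M)"
  unfolding is_resolvent_sol_def
proof (intro conjI allI impI)
  show "in_l2_Gamma M (phiM M)" by (simp add: in_l2_Gamma_def phiM_def)
next
  fix x :: int assume x: "0 \<le> x \<and> x < int M"
  define n where "n = nat x"
  have xn: "x = int n" using x n_def by simp
  have nM: "n < M" using x xn by simp
  show "z * fst (phiM M x) - fst (E_op a b c d M (phiM M) x) = 0"
  proof (cases "Suc n < M")
    case True
    thus ?thesis using x nM Phi_step1[of "alpha M" "beta M" n]
      by (simp add: E_op_def phiM_def xn nat_add_distrib)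
  next
    case False
    hence "n = M - 1" using nM by simp
    moreover have "nat (int M - 1) = M - 1" by auto
    ultimately show ?thesis using x nM ab_end[of M] False
      by (simp add: E_op_def phiM_def xn)
  qed
  show "z * snd (phiM M x) - snd (E_op a b c d M (phiM M) x) = (if x = 0 then 1 else 0)"
  proof (cases n)
    case 0
    have "z * snd (Phi (alpha M) (beta M) 0) = 1"
      using ab_sum[of M] z0 c0 by (simp add: Phi_def g_def)
    thus ?thesis using x nM 0 by (simp add: E_op_def phiM_def xn)
  next
    case (Suc m)
    have "int n - 1 = int m" using Suc by simp
    moreover have "nat (1 + int m) = Suc m" by simp
    ultimately show ?thesis using x nM Suc Phi_step2[of "alpha M" "beta M" m]
      by (simp add: E_op_def phiM_def xn)
  qed
qed


definition "hq = 1/(p1-p2)"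
definition "H n = Phi hq (-hq) n"

lemma hom_zero:
  fixes U V :: "nat \<Rightarrow> complex"
  assumes M: "M \<ge> 1"
    and h1: "\<And>n. Suc n < M \<Longrightarrow> z * U n = a * U (Suc n) + b * V (Suc n)"
    and h2: "\<And>n. Suc n < M \<Longrightarrow> z * V (Suc n) = c * U n + d * V n"
    and h3: "V 0 = 0" and h4: "U (M-1) = 0"
  shows "\<And>n. n < M \<Longrightarrow> U n = 0 \<and> V n = 0"
proof -
  have pp: "p1 - p2 \<noteq> 0" using p1p2 by simp
  have ind: "n < M \<Longrightarrow> U n = U 0 * fst (H n) \<and> V n = U 0 * snd (H n)" for n
  proof (induction n)
    case 0
    have "hq*p1 + (-hq)*p2 = hq * (p1-p2)" by (simp add: algebra_simps)
    also have "\<dots> = 1" using pp by (simp add: hq_def)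
    finally have hb: "hq*p1 + (-hq)*p2 = 1" .
    show ?case using h3 hb by (simp add: H_def Phi_def)
  next
    case (Suc n)
    hence IH: "U n = U 0 * fst (H n)" "V n = U 0 * snd (H n)" by auto
    have v: "V (Suc n) = U 0 * snd (H (Suc n))"
    proof -
      have "z * V (Suc n) = U 0 * (c * fst (H n) + d * snd (H n))"
        using h2[OF Suc.prems] IH by (simp add: algebra_simps)
      also have "\<dots> = z * (U 0 * snd (H (Suc n)))"
        using Phi_step2 by (simp add: H_def algebra_simps)
      finally show ?thesis using z0 by simp
    qed
    have "a * U (Suc n) = z * U n - b * V (Suc n)" using h1[OF Suc.prems] by simp
    also have "\<dots> = U 0 * (z * fst (H n) - b * snd (H (Suc n)))"
      using IH v by (simp add: algebra_simps)
    also have "\<dots> = a * (U 0 * fst (H (Suc n)))"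
      using Phi_step1 by (simp add: H_def algebra_simps)
    finally have "U (Suc n) = U 0 * fst (H (Suc n))" using a0 by simp
    thus ?case using v by simp
  qed
  have "fst (H (M-1)) \<noteq> 0"
  proof -
    have "fst (H (M-1)) = hq * (r1^(M-1)*p1 - r2^(M-1)*p2)" by (simp add: H_def Phi_def algebra_simps)
    moreover have "hq \<noteq> 0" using pp by (simp add: hq_def)
    ultimately show ?thesis using pow_ne[of "M-1"] by simp
  qed
  hence "U 0 = 0" using ind[of "M-1"] M h4 by simp
  thus "\<And>n. n < M \<Longrightarrow> U n = 0 \<and> V n = 0"
  proof -
    fix n assume "U 0 = 0" "n < M"
    thus "U n = 0 \<and> V n = 0" using ind[of n] by (simp del: ind)
  qed
qed

lemma uniq:
  assumes M: "M \<ge> 1" and s1: "is_resolvent_sol a b c d M z \<phi>" and s2: "is_resolvent_sol a b c d M z \<psi>"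
  shows "\<phi> = \<psi>"
proof -
  define U where "U n = fst (\<phi> (int n)) - fst (\<psi> (int n))" for n
  define V where "V n = snd (\<phi> (int n)) - snd (\<psi> (int n))" for n
  have l1: "in_l2_Gamma M \<phi>" and l2: "in_l2_Gamma M \<psi>" using s1 s2 by (auto simp: is_resolvent_sol_def)
  have e1: "\<And>x. 0 \<le> x \<and> x < int M \<Longrightarrow> z * fst (\<phi> x) - fst (E_op a b c d M \<phi> x) = 0 \<and>
        z * snd (\<phi> x) - snd (E_op a b c d M \<phi> x) = (if x = 0 then 1 else 0)"
    using s1 by (simp add: is_resolvent_sol_def)
  have e2: "\<And>x. 0 \<le> x \<and> x < int M \<Longrightarrow> z * fst (\<psi> x) - fst (E_op a b c d M \<psi> x) = 0 \<and>
        z * snd (\<psi> x) - snd (E_op a b c d M \<psi> x) = (if x = 0 then 1 else 0)"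
    using s2 by (simp add: is_resolvent_sol_def)
  have h1: "z * U n = a * U (Suc n) + b * V (Suc n)" if "Suc n < M" for n
  proof -
    have "int n < int M" using that by simp
    hence "z * fst (\<phi> (int n)) = a * fst (\<phi> (int n + 1)) + b * snd (\<phi> (int n + 1))"
      "z * fst (\<psi> (int n)) = a * fst (\<psi> (int n + 1)) + b * snd (\<psi> (int n + 1))"
      using e1[of "int n"] e2[of "int n"] by (auto simp: E_op_def)
    thus ?thesis by (simp add: U_def V_def algebra_simps)
  qed
  have h2: "z * V (Suc n) = c * U n + d * V n" if "Suc n < M" for n
  proof -
    have "int (Suc n) < int M" "int (Suc n) \<noteq> 0" using that by auto
    hence "z * snd (\<phi> (int n + 1)) = c * fst (\<phi> (int n)) + d * snd (\<phi> (int n))"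
      "z * snd (\<psi> (int n + 1)) = c * fst (\<psi> (int n)) + d * snd (\<psi> (int n))"
      using e1[of "int n + 1"] e2[of "int n + 1"] by (auto simp: E_op_def)
    thus ?thesis by (simp add: U_def V_def algebra_simps)
  qed
  have h3: "V 0 = 0"
  proof -
    have "\<phi> (-1) = (0,0)" "\<psi> (-1) = (0,0)" using l1 l2 by (auto simp: in_l2_Gamma_def)
    hence "z * snd (\<phi> 0) = 1" "z * snd (\<psi> 0) = 1"
      using e1[of 0] e2[of 0] M by (auto simp: E_op_def)
    hence "snd (\<phi> 0) = snd (\<psi> 0)" using z0 by (metis mult_left_cancel)
    thus ?thesis by (simp add: V_def)
  qed
  have h4: "U (M-1) = 0"
  proof -
    have "\<phi> (int M) = (0,0)" "\<psi> (int M) = (0,0)" using l1 l2 by (auto simp: in_l2_Gamma_def)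
    moreover have "int (M-1) + 1 = int M" "int (M - 1) < int M" using M by auto
    ultimately have "z * fst (\<phi> (int (M-1))) = 0" "z * fst (\<psi> (int (M-1))) = 0"
      using e1[of "int (M-1)"] e2[of "int (M-1)"] by (auto simp: E_op_def)
    thus ?thesis using z0 by (simp add: U_def)
  qed
  have z: "U n = 0 \<and> V n = 0" if "n < M" for n
    using hom_zero[OF M h1 h2 h3 h4 that] by blast
  show ?thesis
  proof
    fix x
    show "\<phi> x = \<psi> x"
    proof (cases "0 \<le> x \<and> x < int M")
      case True
      then obtain n where n: "x = int n" "n < M" by (metis nonneg_int_cases of_nat_less_iff)
      thus ?thesis using z[OF n(2)] by (simp add: U_def V_def prod_eq_iff)
    next
      case False
      thus ?thesis using l1 l2 by (simp add: in_l2_Gamma_def)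
    qed
  qed
qed

lemma the_sol: "M \<ge> 1 \<Longrightarrow> (THE \<phi>. is_resolvent_sol a b c d M z \<phi>) = phiM M"
  by (rule the_equality) (simp_all add: exist uniq)

end


context W begin

lemma lamcc: "cnj lam * lam = 1" using lam_cnj by (simp add: mult.commute)

lemma rr11: "r1 * cnj r1 = of_real (mu^2)"
proof -
  have "r1 * cnj r1 = (lam * cnj lam) * of_real (mu^2)" by (simp add: r1_def power2_eq_square algebra_simps)
  thus ?thesis using lam_cnj by simp
qed
lemma rr22: "r2 * cnj r2 = of_real (1/mu^2)"
proof -
  have "r2 * cnj r2 = (lam * cnj lam) * of_real (1/mu^2)" by (simp add: r2_def power2_eq_square algebra_simps)
  thus ?thesis using lam_cnj by simp
qed
lemma rr12: "r1 * cnj r2 = 1"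
proof -
  have "r1 * cnj r2 = (lam * cnj lam) * (of_real mu / of_real mu)" by (simp add: r1_def r2_def algebra_simps)
  thus ?thesis using lam_cnj mu0 by simp
qed
lemma rr21: "r2 * cnj r1 = 1"
proof -
  have "r2 * cnj r1 = (lam * cnj lam) * (of_real mu / of_real mu)" by (simp add: r1_def r2_def algebra_simps)
  thus ?thesis using lam_cnj mu0 by simp
qed

lemma pp11: "p1 * cnj p1 = c * cnj c * of_real (mu^2)"
  using p_norm[OF mu0 mu_sum] by (simp add: p1_def r1_def)
lemma pp22: "p2 * cnj p2 = c * cnj c * of_real (1/mu^2)"
  using p_norm[of "1/mu"] mu0 mu_inv_sum by (simp add: p2_def r2_def divide_inverse power_inverse)

definition "K = p1 * cnj p2 + c * cnj c"

lemma term_c: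
  "of_real ((cmod (fst (Phi A B n)))^2 + (cmod (snd (Phi A B n)))^2) =
   of_real ((cmod A)^2 * (cmod c)^2 * (mu^2 + 1) * (mu^2)^n
          + (cmod B)^2 * (cmod c)^2 * (1/mu^2 + 1) * (1/mu^2)^n)
   + (A * cnj B * K + cnj (A * cnj B * K))"
proof -
  define u where "u = r1^n"
  define v where "v = r2^n"
  define X where "X = A * u * p1 + B * v * p2"
  define Y where "Y = c * (A * u + B * v)"
  have ph: "Phi A B n = (X, Y)" by (simp add: Phi_def X_def Y_def u_def v_def)
  have uu: "u * cnj u = of_real ((mu^2)^n)" using rr11 by (simp add: u_def power_mult_distrib[symmetric])
  have vv: "v * cnj v = of_real ((1/mu^2)^n)" using rr22 by (simp add: v_def power_mult_distrib[symmetric])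
  have uv: "u * cnj v = 1" using rr12 by (simp add: u_def v_def power_mult_distrib[symmetric])
  have vu: "v * cnj u = 1" using rr21 by (simp add: u_def v_def power_mult_distrib[symmetric])
  have e: "X * cnj X + Y * cnj Y = A * cnj A * (u * cnj u) * (p1 * cnj p1 + c * cnj c) + B * cnj B * (v * cnj v) * (p2 * cnj p2 + c * cnj c)
      + A * cnj B * (u * cnj v) * (p1 * cnj p2 + c * cnj c) + B * cnj A * (v * cnj u) * (p2 * cnj p1 + c * cnj c)"
    by (simp add: X_def Y_def algebra_simps)
  also have "\<dots> = (A* cnj A)*(c* cnj c)* of_real ((mu^2)^n * (mu^2+1)) + (B* cnj B)*(c* cnj c)* of_real ((1/mu^2)^n*(1/mu^2+1))
      + (A * cnj B * K + cnj (A * cnj B * K))"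
    unfolding uu vv uv vu pp11 pp22 K_def by (simp add: algebra_simps)
  also have "\<dots> = of_real ((cmod A)^2 * (cmod c)^2 * (mu^2 + 1) * (mu^2)^n
          + (cmod B)^2 * (cmod c)^2 * (1/mu^2 + 1) * (1/mu^2)^n)
   + (A * cnj B * K + cnj (A * cnj B * K))"
    by (simp only: complex_norm_square[symmetric] of_real_mult of_real_add mult_ac)
  finally show ?thesis unfolding ph complex_norm_square[symmetric] by simp
qed

lemma term_r:
  "(cmod (fst (Phi A B n)))^2 + (cmod (snd (Phi A B n)))^2 =
   (cmod A)^2 * (cmod c)^2 * (mu^2 + 1) * (mu^2)^n
          + (cmod B)^2 * (cmod c)^2 * (1/mu^2 + 1) * (1/mu^2)^n + 2 * Re (A * cnj B * K)"
proof -
  have "Re (of_real ((cmod (fst (Phi A B n)))^2 + (cmod (snd (Phi A B n)))^2)) =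
     Re (of_real ((cmod A)^2 * (cmod c)^2 * (mu^2 + 1) * (mu^2)^n
          + (cmod B)^2 * (cmod c)^2 * (1/mu^2 + 1) * (1/mu^2)^n)
   + (A * cnj B * K + cnj (A * cnj B * K)))" using term_c by metis
  thus ?thesis by (simp add: algebra_simps)
qed

end


context W begin

definition "Q = mu^2"
definition "Ei = 1 / mu^2"
definition "w M = r2^(M-1) * p2 / (r1^(M-1) * p1)"

lemma Q1: "Q > 1" using mu_gt by (simp add: Q_def)
lemma Ei0: "Ei > 0" using mu0 by (simp add: Ei_def)
lemma Ei1: "Ei < 1" using mu_gt by (simp add: Ei_def divide_less_eq)
lemma QE: "Q * Ei = 1" using mu0 by (simp add: Q_def Ei_def)

lemma p1n0: "p1 \<noteq> 0" using norm_p1 c0 mu0 by auto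
lemma r1n0: "r1 \<noteq> 0" using norm_r1 mu0 by auto

lemma energy_eq:
  assumes M: "M \<ge> 1"
  shows "energy a b c d sqD \<omega> M =
    (cmod (alpha M))^2 * (cmod c)^2 * (Q + 1) * ((Q^M - 1) / (Q - 1))
  + (cmod (beta M))^2 * (cmod c)^2 * (Ei + 1) * ((Ei^M - 1) / (Ei - 1))
  + real M * (2 * Re (alpha M * cnj (beta M) * K))"
proof -
  have th: "(THE \<phi>. is_resolvent_sol a b c d M (sqD * \<omega>) \<phi>) = phiM M"
    using the_sol[OF M] by (simp add: z_def)
  have "energy a b c d sqD \<omega> M = (\<Sum>n<M. (cmod (fst (Phi (alpha M) (beta M) n)))^2 + (cmod (snd (Phi (alpha M) (beta M) n)))^2)"
    unfolding energy_def Let_def th by (intro sum.cong) (auto simp: phiM_def)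
  also have "\<dots> = (\<Sum>n<M. (cmod (alpha M))^2 * (cmod c)^2 * (Q + 1) * Q^n
          + (cmod (beta M))^2 * (cmod c)^2 * (Ei + 1) * Ei^n + 2 * Re (alpha M * cnj (beta M) * K))"
    by (simp add: term_r Q_def Ei_def)
  also have "\<dots> = (cmod (alpha M))^2 * (cmod c)^2 * (Q + 1) * (\<Sum>n<M. Q^n)
          + (cmod (beta M))^2 * (cmod c)^2 * (Ei + 1) * (\<Sum>n<M. Ei^n) + real M * (2 * Re (alpha M * cnj (beta M) * K))"
    by (simp add: sum.distrib sum_distrib_left)
  also have "\<dots> = (cmod (alpha M))^2 * (cmod c)^2 * (Q + 1) * ((Q^M - 1) / (Q - 1))
  + (cmod (beta M))^2 * (cmod c)^2 * (Ei + 1) * ((Ei^M - 1) / (Ei - 1))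
  + real M * (2 * Re (alpha M * cnj (beta M) * K))"
    using Q1 Ei1 by (simp add: geometric_sum)
  finally show ?thesis .
qed

lemma norm_w: "cmod (w M) = Ei ^ M" if "M \<ge> 1"
proof -
  have "cmod (w M) = (1/\<bar>mu\<bar>)^(M-1) * (cmod c / \<bar>mu\<bar>) / (\<bar>mu\<bar>^(M-1) * (cmod c * \<bar>mu\<bar>))"
    by (simp add: w_def norm_mult norm_divide norm_power norm_r1 norm_r2 norm_p1 norm_p2)
  also have "\<dots> = (1/\<bar>mu\<bar>)^(2*M)"
  proof -
    have M': "M = Suc (M-1)" using that by simp
    have aa: "\<bar>mu\<bar>^(M-1) * \<bar>mu\<bar>^(M-1) = (mu^2)^(M-1)"
      by (metis power_mult_distrib abs_mult_self_eq power2_eq_square)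
    show ?thesis using c0 mu0 aa by (subst (3) M') (simp add: field_simps power_mult_distrib power_add power_mult)
  qed
  also have "\<dots> = Ei ^ M" by (simp add: Ei_def power_mult power2_eq_square power_divide)
  finally show ?thesis .
qed

lemma alpha_w: "alpha M = g * w M / (w M - 1)" and beta_w: "beta M = g / (1 - w M)"
proof -
  define k where "k = M - 1"
  have x: "r1^k * p1 \<noteq> 0" using p1n0 r1n0 by simp
  show "alpha M = g * w M / (w M - 1)"
    unfolding alpha_def w_def Dm_def k_def[symmetric] using x p1n0 r1n0 by (simp add: field_simps)
  show "beta M = g / (1 - w M)"
    unfolding beta_def w_def Dm_def k_def[symmetric] using x p1n0 r1n0
    apply (simp add: field_simps)
    by (metis minus_diff_eq minus_divide_right)
qed

end


context W begin

lemma ev1: "eventually (\<lambda>M. M \<ge> (1::nat)) sequentially" by (rule eventually_ge_at_top)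

lemma Ei_pow_lim: "(\<lambda>M. Ei ^ M) \<longlonglongrightarrow> 0"
  using Ei0 Ei1 by (intro LIMSEQ_power_zero) simp

lemma w_lim: "w \<longlonglongrightarrow> 0"
proof -
  have "(\<lambda>M. cmod (w M)) \<longlonglongrightarrow> 0"
    by (rule Lim_transform_eventually[OF Ei_pow_lim], rule eventually_mono[OF ev1]) (simp add: norm_w)
  thus ?thesis by (rule tendsto_norm_zero_cancel)
qed

lemma Mw_lim: "(\<lambda>M. of_nat M * w M) \<longlonglongrightarrow> 0"
proof -
  have l0: "(\<lambda>n. of_nat n * Ei ^ n) \<longlonglongrightarrow> 0"
    using Ei0 Ei1 by (intro powser_times_n_limit_0) simp
  have "(\<lambda>M. cmod (of_nat M * w M)) \<longlonglongrightarrow> 0"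
    by (rule Lim_transform_eventually[OF l0], rule eventually_mono[OF ev1]) (simp add: norm_w norm_mult)
  thus ?thesis by (rule tendsto_norm_zero_cancel)
qed

lemma alpha_lim: "alpha \<longlonglongrightarrow> 0"
proof -
  have "(\<lambda>M. g * w M / (w M - 1)) \<longlonglongrightarrow> g * 0 / (0 - 1)"
    by (intro tendsto_intros w_lim) simp
  thus ?thesis by (simp add: alpha_w[abs_def])
qed

lemma beta_lim: "beta \<longlonglongrightarrow> g"
proof -
  have "(\<lambda>M. g / (1 - w M)) \<longlonglongrightarrow> g / (1 - 0)"
    by (intro tendsto_intros w_lim) simp
  thus ?thesis by (simp add: beta_w[abs_def])
qed

lemma Malpha_lim: "(\<lambda>M. of_nat M * alpha M) \<longlonglongrightarrow> 0"
proof -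
  have "(\<lambda>M. g * (of_nat M * w M) / (w M - 1)) \<longlonglongrightarrow> g * 0 / (0 - 1)"
    by (intro tendsto_intros w_lim Mw_lim) simp
  moreover have "(\<lambda>M. of_nat M * alpha M) = (\<lambda>M. g * (of_nat M * w M) / (w M - 1))"
    by (simp add: alpha_w fun_eq_iff)
  ultimately show ?thesis by simp
qed

lemma aQ_lim: "(\<lambda>M. (cmod (alpha M))^2 * Q^M) \<longlonglongrightarrow> 0"
proof -
  have "(\<lambda>M. (cmod g)^2 * Ei^M / (cmod (w M - 1))^2) \<longlonglongrightarrow> (cmod g)^2 * 0 / (cmod (0 - 1))^2"
    by (intro tendsto_intros w_lim Ei_pow_lim) simp
  hence l: "(\<lambda>M. (cmod g)^2 * Ei^M / (cmod (w M - 1))^2) \<longlonglongrightarrow> 0" by simp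
  have eq: "(cmod (alpha M))^2 * Q^M = (cmod g)^2 * Ei^M / (cmod (w M - 1))^2" if "M \<ge> 1" for M
  proof -
    have "(cmod (alpha M))^2 * Q^M = (cmod g)^2 * ((cmod (w M))^2 * Q^M) / (cmod (w M - 1))^2"
      by (simp add: alpha_w norm_mult norm_divide power_mult_distrib power_divide)
    also have "(cmod (w M))^2 * Q^M = Ei^M"
    proof -
      have "(cmod (w M))^2 * Q^M = (Ei * (Ei * Q))^M"
        using norm_w[OF that] by (simp add: power2_eq_square power_mult_distrib)
      also have "Ei * (Ei * Q) = Ei" using QE by (simp add: mult.commute)
      finally show ?thesis .
    qed
    finally show ?thesis .
  qed
  show ?thesis by (rule Lim_transform_eventually[OF l], rule eventually_mono[OF ev1]) (simp add: eq)
qed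

end


context W begin

lemma limit_value: "(cmod g)^2 * (cmod c)^2 * (Ei + 1) * ((0 - 1) / (Ei - 1)) = cosh \<theta> / sinh \<theta>"
proof -
  have g1: "(cmod g)^2 * (cmod c)^2 = 1"
    using c0 by (simp add: g_def norm_divide norm_mult norm_z power_divide power_mult_distrib)
  define y where "y = exp \<theta>"
  have y1: "y > 1" using th by (simp add: y_def)
  have Ey: "Ei = 1 / y^2" using mu_sq by (simp add: Ei_def y_def exp_double power2_eq_square)
  have ch: "cosh \<theta> / sinh \<theta> = (y + 1/y) / (y - 1/y)"
  proof -
    have c1: "cosh \<theta> = (y + 1/y)/2" by (simp add: cosh_def y_def exp_minus inverse_eq_divide)
    have s1: "sinh \<theta> = (y - 1/y)/2" by (simp add: sinh_def y_def exp_minus inverse_eq_divide)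
    have h: "\<And>A B::real. (A/2)/(B/2) = A/B" by (simp add: divide_divide_eq_left' divide_divide_eq_right)
    show ?thesis unfolding c1 s1 by (rule h)
  qed
  have y0: "y \<noteq> 0" and yy: "y*y - 1 \<noteq> 0" and yy': "y*y*y - y \<noteq> 0" using y1
    by (auto simp: algebra_simps) (smt (verit) mult_less_cancel_left2 mult_le_cancel_left1)+
  have A: "(Ei+1)*((0-1)/(Ei-1)) = (y*y+1)/(y*y-1)"
    unfolding Ey using y0 yy by (simp add: power2_eq_square divide_simps) (simp add: algebra_simps)
  have B: "(y+1/y)/(y-1/y) = (y*y+1)/(y*y-1)"
    using y0 yy by (simp add: divide_simps)
  have "(cmod g)^2 * (cmod c)^2 * (Ei + 1) * ((0 - 1) / (Ei - 1)) = (Ei+1)*((0-1)/(Ei-1))"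
    using g1 by simp
  thus ?thesis unfolding ch A B .
qed

lemma energy_lim: "(\<lambda>M. energy a b c d sqD \<omega> M) \<longlonglongrightarrow> cosh \<theta> / sinh \<theta>"
proof -
  define F where "F M = (cmod c)^2 * (Q + 1) / (Q - 1) * ((cmod (alpha M))^2 * Q^M - (cmod (alpha M))^2)
     + (cmod (beta M))^2 * (cmod c)^2 * (Ei + 1) * ((Ei^M - 1) / (Ei - 1))
     + 2 * Re (of_nat M * alpha M * cnj (beta M) * K)" for M
  have "F \<longlonglongrightarrow> (cmod c)^2 * (Q + 1) / (Q - 1) * (0 - (cmod 0)^2)
     + (cmod g)^2 * (cmod c)^2 * (Ei + 1) * ((0 - 1) / (Ei - 1))
     + 2 * Re (0 * cnj g * K)"
    unfolding F_def
    by (intro tendsto_intros aQ_lim alpha_lim beta_lim Malpha_lim Ei_pow_lim) (use Ei1 in simp)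
  hence lF: "F \<longlonglongrightarrow> cosh \<theta> / sinh \<theta>" using limit_value by simp
  have eq: "F M = energy a b c d sqD \<omega> M" if "M \<ge> 1" for M
  proof -
    have "Re (of_nat M * alpha M * cnj (beta M) * K) = real M * Re (alpha M * cnj (beta M) * K)"
      by (simp add: mult.assoc)
    thus ?thesis unfolding energy_eq[OF that] F_def using Q1
      by (simp add: field_simps)
  qed
  show ?thesis by (rule Lim_transform_eventually[OF lF], rule eventually_mono[OF ev1]) (simp add: eq)
qed

lemma second: "cosh \<theta> / sinh \<theta> = cmod (xfun a \<omega>) / sqrt ((cmod (xfun a \<omega>))\<^sup>2 - 1)"
proof -
  have "sqrt ((cosh \<theta>)^2 - 1) = sinh \<theta>"
    using th cosh_square_eq[of \<theta>] by simp
  thus ?thesis using ch by simp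
qed

end

theorem mainTheorem9:
  fixes a b c d sqD \<omega> :: complex and \<theta> :: real
  assumes "unitary2 a b c d"
    and "a * b * c * d \<noteq> 0"
    and "sqD ^ 2 = a * d - b * c"
    and "\<omega> \<in> B_out a"
    and "\<theta> > 0" and "cosh \<theta> = cmod (xfun a \<omega>)"
  shows "(\<lambda>M. energy a b c d sqD \<omega> M) \<longlonglongrightarrow> cosh \<theta> / sinh \<theta>
     \<and> cosh \<theta> / sinh \<theta> = cmod (xfun a \<omega>) / sqrt ((cmod (xfun a \<omega>))\<^sup>2 - 1)"
proof -
  interpret W a b c d sqD \<omega> \<theta> using assms by unfold_locales
  show ?thesis using energy_lim second by blast
qed


end
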